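(* Let $A$ be a finite alphabet with $k=|A|$. For all $u\in A^*$ and $n\in\mathbb{N}$ there exists some $v\in A^*$ with $v\lesssim_n u$ and $|v|\leq f_k(n)$.
   Context: For words $u,v$, $u\sqsubseteq v$ (subword) means $u=a_1\cdots a_\ell$ with letters $a_i$ and $v=v_0a_1v_1\cdots a_\ell v_\ell$ for some words $v_i$. For $n\in\mathbb{N}$, $u\sim_n v$ iff $u$ and $v$ have exactly the same subwords of length at most $n$, and $u\lesssim_n v$ iff $u\sim_n v$ and $u\sqsubseteq v$. The functions $f_k:\mathbb{N}\to\mathbb{N}$ ($k\geq1$) are defined by $f_1(n)=n$ and $f_{k+1}(n)=\max_{0\leq m\leq n}\bigl(m f_k(n+1-m)+m+f_k(n-m)\bigr)$. *)

theory Defs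
  imports Main "HOL-Library.Sublist"
begin

definition sim_n :: "nat \<Rightarrow> 'a list \<Rightarrow> 'a list \<Rightarrow> bool" where
  "sim_n n u v \<longleftrightarrow> {w. subseq w u \<and> length w \<le> n} = {w. subseq w v \<and> length w \<le> n}"

definition lesssim_n :: "nat \<Rightarrow> 'a list \<Rightarrow> 'a list \<Rightarrow> bool" where
  "lesssim_n n u v \<longleftrightarrow> sim_n n u v \<and> subseq u v"

text \<open>f k n for k \<ge> 1; the value at k = 0 is an unused dummy.\<close>
fun f :: "nat \<Rightarrow> nat \<Rightarrow> nat" where
  "f 0 n = 0"
| "f (Suc 0) n = n"
| "f (Suc (Suc k)) n =
     Max ((\<lambda>m. m * f (Suc k) (n + 1 - m) + m + f (Suc k) (n - m)) ` {0..n})"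

end

theory Submission
  imports Defs
begin

lemma subseq_set_sub: "subseq x u \<Longrightarrow> set x \<subseteq> set u"
  by (induct rule: list_emb.induct) auto

lemma subseq_snoc_cases:
  assumes "subseq (y @ [c]) (w @ [a])"
  shows "(c = a \<and> subseq y w) \<or> subseq (y @ [c]) w"
proof -
  obtain xs1 xs2 where e: "y @ [c] = xs1 @ xs2" "subseq xs1 w" "subseq xs2 [a]"
    using subseq_appendE[OF assms] by blast
  have "xs2 = [] \<or> xs2 = [a]"
  proof (cases xs2)
    case (Cons b bs)
    then have "length bs = 0" using list_emb_length[OF e(3)] by simp
    then show ?thesis using Cons e(3) by (cases "b = a") auto
  qed simp
  then show ?thesis using e by auto
qed

fun glue :: "('a list \<times> 'a) list \<Rightarrow> 'a list \<Rightarrow> 'a list" where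
  "glue [] r = r"
| "glue ((w,a)#ws) r = w @ a # glue ws r"

lemma univ:
  assumes "\<forall>(w,a)\<in>set ws. A \<subseteq> set (w @ [a])" "set x \<subseteq> A" "length x \<le> length ws"
  shows "subseq x (glue ws r)"
  using assms
proof (induct ws arbitrary: x)
  case Nil then show ?case by simp
next
  case (Cons p ws)
  obtain w a where p: "p = (w,a)" by (cases p)
  show ?case
  proof (cases x)
    case Nil then show ?thesis by simp
  next
    case (Cons c x')
    have "c \<in> set (w @ [a])" using Cons.prems p Cons by auto
    then have 1: "subseq [c] (w @ [a])" by (simp add: subseq_singleton_left)
    have 2: "subseq x' (glue ws r)" using Cons.hyps Cons.prems Cons by auto
    have "subseq ([c] @ x') ((w @ [a]) @ glue ws r)" by (rule list_emb_append_mono[OF 1 2])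
    then show ?thesis using p Cons by simp
  qed
qed

lemma split_lem:
  assumes "subseq x ((w @ [a]) @ R)" "x \<noteq> []" "A \<subseteq> set (w @ [a])" "set x \<subseteq> A"
    and U: "\<And>y. set y \<subseteq> A \<Longrightarrow> length y \<le> m0 \<Longrightarrow> subseq y R"
  shows "\<exists>x1 x2. x = x1 @ x2 \<and> x1 \<noteq> [] \<and> subseq x1 (w @ [a]) \<and> subseq x2 R
     \<and> min (length x - 1) m0 \<le> length x2"
proof -
  obtain y z where e: "x = y @ z" "subseq y (w @ [a])" "subseq z R"
    using subseq_appendE[OF assms(1)] by blast
  define t where "t = min (length x - 1) m0"
  define j where "j = length x - t"
  have j1: "j \<ge> 1" using assms(2) unfolding j_def t_def by (cases x) auto
  show ?thesis
  proof (cases "length y \<ge> j")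
    case True
    have "take j x = take j y" using True e(1) by simp
    then have "prefix (take j x) y" by (simp add: take_is_prefix)
    then have a1: "subseq (take j x) (w @ [a])" using e(2)
      using prefix_imp_subseq subseq_order.order_trans by blast
    have "set (drop j x) \<subseteq> A" using assms(4) set_drop_subset by fast
    moreover have "length (drop j x) \<le> m0" unfolding j_def t_def by simp
    ultimately have a2: "subseq (drop j x) R" using U by blast
    have "take j x \<noteq> []" using j1 assms(2) by simp
    moreover have "length (drop j x) = t" unfolding j_def t_def by simp
    ultimately show ?thesis using a1 a2 unfolding t_def
      by (intro exI[of _ "take j x"] exI[of _ "drop j x"]) simp
  next
    case False
    show ?thesis
    proof (cases "y = []")
      case True
      then obtain c z' where z: "z = c # z'" using assms(2) e(1) by (cases z) auto
      have "c \<in> A" using assms(4) e(1) z True by auto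
      then have "subseq [c] (w @ [a])" using assms(3) by (auto simp: subseq_singleton_left)
      moreover have "subseq z' R" using e(3) z subseq_Cons' by metis
      moreover have "x = [c] @ z'" using e(1) z True by simp
      ultimately show ?thesis by (intro exI[of _ "[c]"] exI[of _ z']) auto
    next
      case nE: False
      have "length z > t" using False e(1) unfolding j_def by auto
      then have "min (length x - 1) m0 \<le> length z" unfolding t_def by linarith
      then show ?thesis using e nE by blast
    qed
  qed
qed


lemma sim_use: "sim_n p w' w \<Longrightarrow> subseq x w \<Longrightarrow> length x \<le> p \<Longrightarrow> subseq x w'"
  unfolding sim_n_def by blast

lemma snoc_use:
  assumes "subseq x1 (w @ [a])" "length x1 \<le> Suc q" "sim_n (Suc q) w' w"
  shows "subseq x1 (w' @ [a])"
proof (cases x1 rule: rev_cases)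
  case Nil then show ?thesis by simp
next
  case (snoc y c)
  from subseq_snoc_cases[of y c w a] assms(1) snoc
  have "(c = a \<and> subseq y w) \<or> subseq (y @ [c]) w" by simp
  then show ?thesis
  proof
    assume h: "c = a \<and> subseq y w"
    then have "subseq y w'" using sim_use[OF assms(3)] assms(2) snoc by simp
    then show ?thesis using h snoc by simp
  next
    assume h: "subseq (y @ [c]) w"
    then have "subseq (y @ [c]) w'" using sim_use[OF assms(3)] assms(2) snoc by simp
    then show ?thesis using snoc subseq_rev_drop_many by blast
  qed
qed

definition rel :: "'a set \<Rightarrow> nat \<Rightarrow> nat \<Rightarrow> ('a list \<times> 'a) \<Rightarrow> ('a list \<times> 'a) \<Rightarrow> bool" where
  "rel A q k wa wa' \<longleftrightarrow> snd wa' = snd wa \<and> set (fst wa') \<subseteq> A - {snd wa}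
     \<and> lesssim_n (Suc q) (fst wa') (fst wa) \<and> length (fst wa') \<le> f k (Suc q)"

lemma cover:
  assumes "list_all2 (rel B q k) ws ws'"
   "\<forall>(w,a)\<in>set ws. A \<subseteq> set (w @ [a])"
   "sim_n q r' r"
   "set x \<subseteq> A" "subseq x (glue ws r)" "length x \<le> length ws + q"
  shows "subseq x (glue ws' r')"
  using assms
proof (induct ws arbitrary: ws' x)
  case Nil
  then have "ws' = []" by simp
  then show ?case using Nil sim_use[OF Nil(3)] by simp
next
  case (Cons p ws0)
  obtain w a where p: "p = (w,a)" by (cases p)
  obtain p' ws0' where ws': "ws' = p' # ws0'" "rel B q k p p'" "list_all2 (rel B q k) ws0 ws0'"
    using Cons.prems(1) by (cases ws') auto
  obtain w' where p': "p' = (w',a)" using ws'(2) p unfolding rel_def by (cases p') auto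
  have sw: "sim_n (Suc q) w' w" using ws'(2) p p' unfolding rel_def lesssim_n_def by simp
  show ?case
  proof (cases "x = []")
    case True then show ?thesis by simp
  next
    case False
    have A1: "A \<subseteq> set (w @ [a])" using Cons.prems(2) p by auto
    have U: "\<And>y. set y \<subseteq> A \<Longrightarrow> length y \<le> length ws0 \<Longrightarrow> subseq y (glue ws0 r)"
      by (rule univ) (use Cons.prems(2) p in auto)
    have "subseq x ((w @ [a]) @ glue ws0 r)" using Cons.prems(5) p by simp
    from split_lem[OF this False A1 Cons.prems(4) U]
    obtain x1 x2 where sp: "x = x1 @ x2" "x1 \<noteq> []" "subseq x1 (w @ [a])" "subseq x2 (glue ws0 r)"
      "min (length x - 1) (length ws0) \<le> length x2" by blast
    have "length x1 \<ge> 1" using sp(2) by (cases x1) auto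
    then have l1: "length x2 \<le> length ws0 + q" using sp(1) Cons.prems(6) by simp
    have s2: "set x2 \<subseteq> A" using sp(1) Cons.prems(4) by auto
    have i2: "subseq x2 (glue ws0' r')"
      using Cons.hyps[OF ws'(3) _ Cons.prems(3) s2 sp(4) l1] Cons.prems(2) p by simp
    have "length x1 \<le> Suc q"
    proof (cases "length ws0 \<le> length x - 1")
      case True
      then have "length ws0 \<le> length x2" using sp(5) by simp
      then show ?thesis using sp(1) Cons.prems(6) by simp
    next
      case False
      then have "length x - 1 \<le> length x2" using sp(5) by simp
      then show ?thesis using sp(1) by simp
    qed
    then have i1: "subseq x1 (w' @ [a])" using snoc_use[OF sp(3) _ sw] by simp
    have "subseq (x1 @ x2) ((w' @ [a]) @ glue ws0' r')" by (rule list_emb_append_mono[OF i1 i2])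
    then show ?thesis using sp(1) ws'(1) p' by simp
  qed
qed

lemma glue_subseq:
  "list_all2 (rel B q k) ws ws' \<Longrightarrow> subseq r' r \<Longrightarrow> subseq (glue ws' r') (glue ws r)"
proof (induct rule: list_all2_induct)
  case Nil then show ?case by simp
next
  case (Cons p ws p' ws')
  obtain w a where p: "p = (w,a)" by (cases p)
  obtain w' where p': "p' = (w',a)" using Cons(1) p unfolding rel_def by (cases p') auto
  have "subseq w' w" using Cons(1) p p' unfolding rel_def lesssim_n_def by simp
  have "subseq (a # glue ws' r') (a # glue ws r)" using Cons by simp
  then have "subseq (w' @ (a # glue ws' r')) (w @ (a # glue ws r))"
    by (rule list_emb_append_mono[OF \<open>subseq w' w\<close>])
  then show ?case using p p' by simp
qed

lemma glue_set:
  "list_all2 (rel B q k) ws ws' \<Longrightarrow> \<forall>(w,a)\<in>set ws. a \<in> B \<Longrightarrow> set r' \<subseteq> B \<Longrightarrow> set (glue ws' r') \<subseteq> B"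
proof (induct rule: list_all2_induct)
  case Nil then show ?case by simp
next
  case (Cons p ws p' ws')
  obtain w a where p: "p = (w,a)" by (cases p)
  obtain w' where p': "p' = (w',a)" using Cons(1) p unfolding rel_def by (cases p') auto
  have "set w' \<subseteq> B" using Cons(1) p p' unfolding rel_def by auto
  then show ?case using Cons p p' by auto
qed

lemma glue_length:
  "list_all2 (rel B q k) ws ws' \<Longrightarrow> length (glue ws' r') \<le> length ws * (f k (Suc q) + 1) + length r'"
proof (induct rule: list_all2_induct)
  case Nil then show ?case by simp
next
  case (Cons p ws p' ws')
  obtain w a where p: "p = (w,a)" by (cases p)
  obtain w' where p': "p' = (w',a)" using Cons(1) p unfolding rel_def by (cases p') auto
  have "length w' \<le> f k (Suc q)" using Cons(1) p p' unfolding rel_def by auto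
  then show ?case using Cons p p' by simp
qed

lemma choice_list: "\<forall>x\<in>set xs. \<exists>y. P x y \<Longrightarrow> \<exists>ys. list_all2 P xs ys"
proof (induct xs)
  case Nil then show ?case by simp
next
  case (Cons x xs)
  then obtain y ys where "P x y" "list_all2 P xs ys" by auto
  then show ?case by (intro exI[of _ "y # ys"]) simp
qed

lemma prefix_split:
  assumes "A \<noteq> {}" "A \<subseteq> set u"
  shows "\<exists>w a r0. u = w @ a # r0 \<and> \<not> A \<subseteq> set w \<and> A \<subseteq> set (w @ [a])"
proof -
  define j where "j = (LEAST j. A \<subseteq> set (take j u))"
  have ex: "A \<subseteq> set (take (length u) u)" using assms by simp
  have jA: "A \<subseteq> set (take j u)" unfolding j_def by (rule LeastI[of "\<lambda>j. A \<subseteq> set (take j u)", OF ex])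
  have jle: "j \<le> length u" unfolding j_def by (rule Least_le[of "\<lambda>j. A \<subseteq> set (take j u)", OF ex])
  have j0: "j \<noteq> 0" using jA assms(1) by auto
  have nj: "\<not> A \<subseteq> set (take (j - 1) u)" using not_less_Least[of "j - 1" "\<lambda>j. A \<subseteq> set (take j u)"] j0
    unfolding j_def by simp
  have lt: "j - 1 < length u" using jle j0 by simp
  have u: "u = take (j - 1) u @ u ! (j - 1) # drop (Suc (j - 1)) u" by (rule id_take_nth_drop[OF lt])
  have "take j u = take (j - 1) u @ [u ! (j - 1)]"
    using take_Suc_conv_app_nth[OF lt] j0 by simp
  then have "A \<subseteq> set (take (j - 1) u @ [u ! (j - 1)])" using jA by simp
  then show ?thesis using u nj by blast
qed

lemma decomp:
  assumes "A \<noteq> {}" "set u \<subseteq> A"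
  shows "\<exists>ws r. u = glue ws r \<and> length ws \<le> n \<and>
    (\<forall>(w,a)\<in>set ws. a \<in> A \<and> a \<notin> set w \<and> set w \<subseteq> A \<and> A \<subseteq> set (w @ [a])) \<and>
    (length ws = n \<or> \<not> A \<subseteq> set r)"
  using assms(2)
proof (induct n arbitrary: u)
  case 0
  show ?case by (rule exI[of _ "[]"], rule exI[of _ u]) simp
next
  case (Suc n)
  show ?case
  proof (cases "A \<subseteq> set u")
    case False
    show ?thesis by (rule exI[of _ "[]"], rule exI[of _ u]) (simp add: False)
  next
    case True
    obtain w a r0 where d: "u = w @ a # r0" "\<not> A \<subseteq> set w" "A \<subseteq> set (w @ [a])"
      using prefix_split[OF assms(1) True] by blast
    have "set r0 \<subseteq> A" using Suc.prems d(1) by auto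
    from Suc.hyps[OF this] obtain ws r where h: "r0 = glue ws r" "length ws \<le> n"
      "\<forall>(w,a)\<in>set ws. a \<in> A \<and> a \<notin> set w \<and> set w \<subseteq> A \<and> A \<subseteq> set (w @ [a])"
      "length ws = n \<or> \<not> A \<subseteq> set r" by blast
    have "a \<notin> set w" using d(2,3) by auto
    moreover have "a \<in> A" "set w \<subseteq> A" using Suc.prems d(1) by auto
    ultimately show ?thesis using h d
      by (intro exI[of _ "(w,a) # ws"] exI[of _ r]) auto
  qed
qed

lemma f_bound: assumes "m \<le> n" shows "m * f k (n + 1 - m) + m + f k (n - m) \<le> f (Suc k) n"
proof (cases k)
  case 0 then show ?thesis using assms by simp
next
  case (Suc k')
  from assms have "m \<in> {0..n}" by simp
  then have "m * f k (n + 1 - m) + m + f k (n - m) \<in>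
     (\<lambda>m. m * f (Suc k') (n + 1 - m) + m + f (Suc k') (n - m)) ` {0..n}" using Suc by blast
  then show ?thesis using Suc by (simp del: f.simps(3)) (simp add: Max_ge)
qed



lemma lesssim_nil: "lesssim_n 0 [] r"
  unfolding lesssim_n_def sim_n_def by auto

lemma glue_suffix_set: "set r \<subseteq> set (glue ws r)"
  by (induct ws) auto

lemma main:
  "finite A \<Longrightarrow> card A = k \<Longrightarrow> set u \<subseteq> A \<Longrightarrow>
    \<exists>v. set v \<subseteq> A \<and> lesssim_n n v u \<and> length v \<le> f k n"
proof (induct k arbitrary: A n u)
  case 0
  then have "u = []" by auto
  then show ?case unfolding lesssim_n_def sim_n_def by (intro exI[of _ "[]"]) simp
next
  case (Suc k)
  have An: "A \<noteq> {}" using Suc.prems(2) by auto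
  obtain ws r where d: "u = glue ws r" "length ws \<le> n"
    "\<forall>(w,a)\<in>set ws. a \<in> A \<and> a \<notin> set w \<and> set w \<subseteq> A \<and> A \<subseteq> set (w @ [a])"
    "length ws = n \<or> \<not> A \<subseteq> set r"
    using decomp[OF An Suc.prems(3), of n] by blast
  define m where "m = length ws"
  define q where "q = n - m"
  have "\<forall>p\<in>set ws. \<exists>p'. rel A q k p p'"
  proof
    fix p assume pin: "p \<in> set ws"
    obtain w a where p: "p = (w,a)" by (cases p)
    have h: "a \<in> A" "a \<notin> set w" "set w \<subseteq> A" using d(3) pin p by auto
    have "finite (A - {a})" "card (A - {a}) = k" "set w \<subseteq> A - {a}"
      using Suc.prems h by auto
    from Suc.hyps[OF this, of "Suc q"] obtain w' where
      "set w' \<subseteq> A - {a}" "lesssim_n (Suc q) w' w" "length w' \<le> f k (Suc q)" by blast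
    then have "rel A q k p (w', a)" using p unfolding rel_def by simp
    then show "\<exists>p'. rel A q k p p'" by blast
  qed
  then have "\<exists>ws'. list_all2 (rel A q k) ws ws'" by (rule choice_list)
  then obtain ws' where ws': "list_all2 (rel A q k) ws ws'" by (rule exE)
  have rA: "set r \<subseteq> A" using glue_suffix_set[of r ws] d(1) Suc.prems(3) by simp
  have "\<exists>r'. set r' \<subseteq> A \<and> lesssim_n q r' r \<and> length r' \<le> f k q"
  proof (cases "m = n")
    case True
    then have "q = 0" unfolding q_def by simp
    then have "set [] \<subseteq> A \<and> lesssim_n q [] r \<and> length [] \<le> f k q" using lesssim_nil by simp
    then show ?thesis by blast
  next
    case False
    then have "\<not> A \<subseteq> set r" using d(4) unfolding m_def by simp
    then obtain b where b: "b \<in> A" "b \<notin> set r" by blast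
    have "finite (A - {b})" "card (A - {b}) = k" "set r \<subseteq> A - {b}"
      using Suc.prems(1,2) b rA by (auto simp: card_Diff_singleton)
    from Suc.hyps[OF this, of q] show ?thesis by blast
  qed
  then obtain r' where r': "set r' \<subseteq> A" "lesssim_n q r' r" "length r' \<le> f k q" by blast
  define v where "v = glue ws' r'"
  have s1: "set v \<subseteq> A" unfolding v_def
    by (rule glue_set[OF ws']) (use d(3) r' in auto)
  have s2: "subseq v u" unfolding v_def d(1)
    by (rule glue_subseq[OF ws']) (use r' in \<open>simp add: lesssim_n_def\<close>)
  have "length v \<le> m * (f k (Suc q) + 1) + f k q"
    using glue_length[OF ws', of r'] r'(3) unfolding v_def m_def by simp
  also have "\<dots> = m * f k (n + 1 - m) + m + f k (n - m)"
    using d(2) unfolding q_def m_def by (simp add: Suc_diff_le algebra_simps)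
  also have "\<dots> \<le> f (Suc k) n" using f_bound[of m n k] d(2) unfolding m_def by simp
  finally have s3: "length v \<le> f (Suc k) n" .
  have s4: "sim_n n v u"
    unfolding sim_n_def
  proof (intro set_eqI iffI)
    fix x assume "x \<in> {w. subseq w v \<and> length w \<le> n}"
    then show "x \<in> {w. subseq w u \<and> length w \<le> n}" using s2 subseq_order.order_trans by blast
  next
    fix x assume "x \<in> {w. subseq w u \<and> length w \<le> n}"
    then have x: "subseq x u \<and> length x \<le> n" by simp
    have "set x \<subseteq> A" using x subseq_set_sub Suc.prems(3) by blast
    moreover have "sim_n q r' r" using r'(2) unfolding lesssim_n_def by simp
    moreover have "\<forall>(w,a)\<in>set ws. A \<subseteq> set (w @ [a])" using d(3) by auto
    moreover have "length x \<le> length ws + q" using x d(2) unfolding q_def m_def by simp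
    ultimately have "subseq x v" unfolding v_def
      using cover[OF ws', of A r' r x] x d(1) by simp
    then show "x \<in> {w. subseq w v \<and> length w \<le> n}" using x by simp
  qed
  show ?case using s1 s2 s3 s4 unfolding lesssim_n_def by blast
qed

theorem theorem6:
  fixes A :: "'a set" and k n :: nat and u :: "'a list"
  assumes "finite A" and "A \<noteq> {}" and "k = card A" and "set u \<subseteq> A"
  shows "\<exists>v. set v \<subseteq> A \<and> lesssim_n n v u \<and> length v \<le> f k n"
  using main[OF assms(1) assms(3)[symmetric] assms(4)] .

end
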